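(* Let $\mathcal{T}$ be a directed poset, $X:\mathcal{T}\to\mathbf{Set}_*$ a diagram of pointed sets, $A$ an abelian group, and $h\in G(X,A)$. Then $h\in K(X,A)$ if and only if the set $\{|h(t)|:t\in\mathcal{T}\}$ is bounded.
   Context: A directed poset $\mathcal{T}$ is regarded as a category with a single morphism $t\to s$ whenever $t\ge s$; $\phi_{t,s}:X(t)\to X(s)$ denotes the structure map. For a pointed set $Y$, $Y\wedge A:=\bigoplus_{Y\setminus\{*\}}A$, with elements finitely supported pointed maps $y:Y\to A$, $s\mapsto y_s$; $\mathrm{supp}(y)=\{s:y_s\neq0\}$ and $|y|:=|\mathrm{supp}(y)|$; $sv$ denotes the element with value $v$ at $s$ and $0$ elsewhere ($*v=0$); pointed maps induce homomorphisms via $f_*(sv)=f(s)v$. Define $G(X,A):=\lim_\mathcal{T}(X\wedge A)$ and let $K(X,A)\subseteq G(X,A)$ be the image of the (injective) natural map $\rho:(\lim_\mathcal{T}X)\wedge A\to G(X,A)$, $\rho(xv)(t)=x(t)v$. *)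

theory Defs
  imports Main
begin

definition directed_poset :: "('t::order) itself \<Rightarrow> bool" where
  "directed_poset _ \<longleftrightarrow> (\<forall>a b::'t. \<exists>c. a \<le> c \<and> b \<le> c)"

text \<open>A diagram of pointed sets on the poset: X t is the carrier, p t the basepoint,
  phi t s : X t \<rightarrow> X s the structure map for t \<ge> s (functorial, pointed).\<close>
definition pointed_diagram ::
  "('t::order \<Rightarrow> 'x set) \<Rightarrow> ('t \<Rightarrow> 'x) \<Rightarrow> ('t \<Rightarrow> 't \<Rightarrow> 'x \<Rightarrow> 'x) \<Rightarrow> bool" where
  "pointed_diagram X p phi \<longleftrightarrow>
     (\<forall>t. p t \<in> X t) \<and>
     (\<forall>t s. s \<le> t \<longrightarrow> (\<forall>x\<in>X t. phi t s x \<in> X s) \<and> phi t s (p t) = p s) \<and>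
     (\<forall>t. \<forall>x\<in>X t. phi t t x = x) \<and>
     (\<forall>t s r. r \<le> s \<longrightarrow> s \<le> t \<longrightarrow> (\<forall>x\<in>X t. phi s r (phi t s x) = phi t r x))"

text \<open>Support of a function into an abelian group and its size |y|.\<close>
definition supp :: "('x \<Rightarrow> 'a::zero) \<Rightarrow> 'x set" where
  "supp y = {s. y s \<noteq> 0}"

text \<open>Y \<and> A for the pointed set (Y, pt): finitely supported maps Y \<rightarrow> A, vanishing at
  the basepoint (and, by convention, outside Y).\<close>
definition smash :: "'x set \<Rightarrow> 'x \<Rightarrow> ('x \<Rightarrow> 'a::ab_group_add) set" where
  "smash Y pt = {y. finite (supp y) \<and> supp y \<subseteq> Y - {pt}}"

text \<open>Induced homomorphism f_* with f_*(s v) = f(s) v, target basepoint q (q v = 0).\<close>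
definition push :: "('x \<Rightarrow> 'y) \<Rightarrow> 'y \<Rightarrow> ('x \<Rightarrow> 'a::ab_group_add) \<Rightarrow> ('y \<Rightarrow> 'a)" where
  "push f q y = (\<lambda>s'. if s' = q then 0 else (\<Sum>s\<in>{s\<in>supp y. f s = s'}. y s))"

definition G_lim ::
  "('t::order \<Rightarrow> 'x set) \<Rightarrow> ('t \<Rightarrow> 'x) \<Rightarrow> ('t \<Rightarrow> 't \<Rightarrow> 'x \<Rightarrow> 'x)
   \<Rightarrow> ('t \<Rightarrow> 'x \<Rightarrow> 'a::ab_group_add) set" where
  "G_lim X p phi = {h. (\<forall>t. h t \<in> smash (X t) (p t)) \<and>
                        (\<forall>t s. s \<le> t \<longrightarrow> push (phi t s) (p s) (h t) = h s)}"

definition lim_X ::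
  "('t::order \<Rightarrow> 'x set) \<Rightarrow> ('t \<Rightarrow> 't \<Rightarrow> 'x \<Rightarrow> 'x) \<Rightarrow> ('t \<Rightarrow> 'x) set" where
  "lim_X X phi = {x. (\<forall>t. x t \<in> X t) \<and> (\<forall>t s. s \<le> t \<longrightarrow> phi t s (x t) = x s)}"

text \<open>rho : (lim X) \<and> A \<rightarrow> G(X,A), rho(x v)(t) = x(t) v, i.e. rho(y)(t) = (ev_t)_* y.\<close>
definition rho :: "('t \<Rightarrow> 'x) \<Rightarrow> (('t \<Rightarrow> 'x) \<Rightarrow> 'a::ab_group_add) \<Rightarrow> ('t \<Rightarrow> 'x \<Rightarrow> 'a)" where
  "rho p y = (\<lambda>t. push (\<lambda>x. x t) (p t) y)"

definition K_img ::
  "('t::order \<Rightarrow> 'x set) \<Rightarrow> ('t \<Rightarrow> 'x) \<Rightarrow> ('t \<Rightarrow> 't \<Rightarrow> 'x \<Rightarrow> 'x)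
   \<Rightarrow> ('t \<Rightarrow> 'x \<Rightarrow> 'a::ab_group_add) set" where
  "K_img X p phi = rho p ` smash (lim_X X phi) p"

end

theory Submission
  imports Defs
begin

locale Gsetup =
  fixes X :: "'t::order \<Rightarrow> 'x set" and p :: "'t \<Rightarrow> 'x"
    and phi :: "'t \<Rightarrow> 't \<Rightarrow> 'x \<Rightarrow> 'x"
    and h :: "'t \<Rightarrow> 'x \<Rightarrow> 'a::ab_group_add"
  assumes dir: "directed_poset TYPE('t)"
    and pd: "pointed_diagram X p phi"
    and hG: "h \<in> G_lim X p phi"
begin

lemma dir': "\<exists>c. (a::'t) \<le> c \<and> b \<le> c"
  using dir unfolding directed_poset_def by blast

lemma phi_in: "s \<le> t \<Longrightarrow> x \<in> X t \<Longrightarrow> phi t s x \<in> X s"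
  using pd unfolding pointed_diagram_def by blast

lemma phi_comp: "r \<le> s \<Longrightarrow> s \<le> t \<Longrightarrow> x \<in> X t \<Longrightarrow> phi s r (phi t s x) = phi t r x"
  using pd unfolding pointed_diagram_def by blast

lemma phi_id: "x \<in> X t \<Longrightarrow> phi t t x = x"
  using pd unfolding pointed_diagram_def by blast

lemma fin: "finite (supp (h t))"
  using hG unfolding G_lim_def smash_def by blast

lemma suppX: "supp (h t) \<subseteq> X t - {p t}"
  using hG unfolding G_lim_def smash_def by blast

lemma hpush: assumes "s \<le> t"
  shows "h s s' = (if s' = p s then 0 else (\<Sum>b\<in>{b\<in>supp (h t). phi t s b = s'}. h t b))"
proof -
  have "push (phi t s) (p s) (h t) = h s" using hG assms by (auto simp: G_lim_def)
  then have "h s s' = push (phi t s) (p s) (h t) s'" by simp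
  then show ?thesis by (simp add: push_def)
qed

lemma L1: assumes "s \<le> t" shows "supp (h s) \<subseteq> phi t s ` supp (h t)"
proof
  fix s' assume "s' \<in> supp (h s)"
  then have "h s s' \<noteq> 0" by (simp add: supp_def)
  with hpush[OF assms, of s'] have "(\<Sum>b\<in>{b\<in>supp (h t). phi t s b = s'}. h t b) \<noteq> 0"
    by (auto split: if_splits)
  then have "{b\<in>supp (h t). phi t s b = s'} \<noteq> {}" by (metis sum.empty)
  then show "s' \<in> phi t s ` supp (h t)" by auto
qed

end

locale Gmax = Gsetup X p phi h for X :: "'t::order \<Rightarrow> 'x set" and p :: "'t \<Rightarrow> 'x"
    and phi :: "'t \<Rightarrow> 't \<Rightarrow> 'x \<Rightarrow> 'x"
    and h :: "'t \<Rightarrow> 'x \<Rightarrow> 'a::ab_group_add" +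
  fixes t0 :: 't
  assumes maxc: "\<forall>t. card (supp (h t)) \<le> card (supp (h t0))"
begin

abbreviation "S t \<equiv> supp (h t)"

lemma L2: assumes "card (S s) = card (S t0)" "s \<le> t"
  shows "card (S t) = card (S t0)" "inj_on (phi t s) (S t)" "phi t s ` S t = S s"
    "\<forall>b\<in>S t. h s (phi t s b) = h t b"
proof -
  have a: "card (S s) \<le> card (phi t s ` S t)"
    using L1[OF assms(2)] fin card_mono by (metis finite_imageI)
  have b: "card (phi t s ` S t) \<le> card (S t)" using card_image_le fin by blast
  have c: "card (S t) \<le> card (S t0)" using maxc by blast
  show 1: "card (S t) = card (S t0)" using a b c assms(1) by linarith
  have ci: "card (phi t s ` S t) = card (S t)" using a b c assms(1) by linarith
  show inj: "inj_on (phi t s) (S t)" using eq_card_imp_inj_on[OF fin ci] .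
  have "S s = phi t s ` S t"
    using card_subset_eq[OF finite_imageI[OF fin] L1[OF assms(2)]] a b c assms(1) by linarith
  then show img: "phi t s ` S t = S s" by simp
  show "\<forall>b\<in>S t. h s (phi t s b) = h t b"
  proof
    fix b assume bS: "b \<in> S t"
    have "phi t s b \<in> S s" using img bS by blast
    hence ne: "phi t s b \<noteq> p s" using suppX by blast
    have "{b'\<in>S t. phi t s b' = phi t s b} = {b}" using inj bS by (auto dest: inj_onD)
    then show "h s (phi t s b) = h t b" using hpush[OF assms(2), of "phi t s b"] ne by simp
  qed
qed

lemma cardge: "t0 \<le> t \<Longrightarrow> card (S t) = card (S t0)"
  using L2(1)[OF refl] .

definition pre where "pre c a = the_inv_into (S c) (phi c t0) a"

lemma pre: assumes "t0 \<le> c" "a \<in> S t0" shows "pre c a \<in> S c" "phi c t0 (pre c a) = a"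
proof -
  have i: "inj_on (phi c t0) (S c)" and im: "phi c t0 ` S c = S t0"
    using L2[OF refl assms(1)] by auto
  show "pre c a \<in> S c" unfolding pre_def using the_inv_into_into[OF i] assms(2) im by blast
  show "phi c t0 (pre c a) = a" unfolding pre_def using f_the_inv_into_f[OF i] assms(2) im by blast
qed

lemma pre_phi: assumes "t0 \<le> c" "b \<in> S c" shows "pre c (phi c t0 b) = b"
proof -
  have i: "inj_on (phi c t0) (S c)" using L2[OF refl assms(1)] by auto
  show ?thesis unfolding pre_def using the_inv_into_f_f[OF i assms(2)] .
qed

lemma compat: assumes "t0 \<le> c" "c \<le> d" "a \<in> S t0" shows "phi d c (pre d a) = pre c a"
proof -
  have d: "t0 \<le> d" using assms order_trans by blast
  have m: "phi d c (pre d a) \<in> S c"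
    using L2(3)[OF cardge[OF assms(1)] assms(2)] pre(1)[OF d assms(3)] by blast
  have pX: "pre d a \<in> X d" using pre(1)[OF d assms(3)] suppX by blast
  have "phi c t0 (phi d c (pre d a)) = a"
    using phi_comp[OF assms(1,2) pX] pre(2)[OF d assms(3)] by simp
  then show ?thesis using pre_phi[OF assms(1) m] by simp
qed

definition up where "up t = (SOME c. t \<le> c \<and> t0 \<le> c)"

lemma up: "t \<le> up t" "t0 \<le> up t"
  using someI_ex[OF dir'[of t t0]] unfolding up_def by auto

definition xa where "xa a t = phi (up t) t (pre (up t) a)"

lemma xa_indep: assumes "t \<le> c" "t0 \<le> c" "a \<in> S t0" shows "xa a t = phi c t (pre c a)"
proof -
  obtain d where d: "c \<le> d" "up t \<le> d" using dir' by blast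
  have t0d: "t0 \<le> d" using d assms order_trans by blast
  have pX: "pre d a \<in> X d" using pre(1)[OF t0d assms(3)] suppX by blast
  have "phi c t (pre c a) = phi d t (pre d a)"
    using compat[OF assms(2) d(1) assms(3)] phi_comp[OF assms(1) d(1) pX] by simp
  moreover have "xa a t = phi d t (pre d a)"
    using compat[OF up(2) d(2) assms(3)] phi_comp[OF up(1) d(2) pX] by (simp add: xa_def)
  ultimately show ?thesis by simp
qed

lemma xa_t0: "a \<in> S t0 \<Longrightarrow> xa a t0 = a"
  using xa_indep[OF order_refl order_refl] pre(2)[OF order_refl] by simp

lemma xa_lim: assumes "a \<in> S t0" shows "xa a \<in> lim_X X phi"
  unfolding lim_X_def
proof (intro CollectI conjI allI impI)
  fix t
  obtain c where c: "t \<le> c" "t0 \<le> c" using dir' by blast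
  have pX: "pre c a \<in> X c" using pre(1)[OF c(2) assms] suppX by blast
  show "xa a t \<in> X t" using xa_indep[OF c assms] phi_in[OF c(1) pX] by simp
next
  fix t s :: 't assume st: "s \<le> t"
  obtain c where c: "t \<le> c" "t0 \<le> c" using dir' by blast
  have sc: "s \<le> c" using st c order_trans by blast
  have pX: "pre c a \<in> X c" using pre(1)[OF c(2) assms] suppX by blast
  show "phi t s (xa a t) = xa a s"
    using xa_indep[OF c assms] xa_indep[OF sc c(2) assms] phi_comp[OF st c(1) pX] by simp
qed

lemma xa_inj: "inj_on xa (S t0)"
  by (metis inj_onI xa_t0)

lemma xa_ne: "a \<in> S t0 \<Longrightarrow> xa a \<noteq> p"
  using xa_t0 suppX by fastforce

definition y where "y z = (if z \<in> xa ` S t0 then h t0 (z t0) else 0)"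

lemma supp_y: "supp y = xa ` S t0"
proof -
  have "\<And>a. a \<in> S t0 \<Longrightarrow> h t0 (xa a t0) \<noteq> 0" using xa_t0 by (simp add: supp_def)
  then show ?thesis unfolding supp_def y_def by auto
qed

lemma y_smash: "y \<in> smash (lim_X X phi) p"
  unfolding smash_def using supp_y fin xa_lim xa_ne by auto

lemma rho_y: "rho p y = h"
proof (rule ext, rule ext)
  fix t s'
  show "rho p y t s' = h t s'"
  proof (cases "s' = p t")
    case True
    then have "h t s' = 0" using suppX[of t] by (auto simp: supp_def)
    then show ?thesis using True by (simp add: rho_def push_def)
  next
    case False
    obtain c where c: "t \<le> c" "t0 \<le> c" using dir' by blast
    define P where "P = {a\<in>S t0. phi c t (pre c a) = s'}"
    have PS: "P \<subseteq> S t0" by (auto simp: P_def)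
    have "rho p y t s' = (\<Sum>z\<in>{z\<in>supp y. z t = s'}. y z)" using False by (simp add: rho_def push_def)
    also have "{z\<in>supp y. z t = s'} = xa ` P"
    proof -
      have "{z\<in>supp y. z t = s'} = {z \<in> xa ` S t0. z t = s'}" by (simp only: supp_y)
      also have "\<dots> = xa ` P"
      proof (intro equalityI subsetI)
        fix z assume "z \<in> {z \<in> xa ` S t0. z t = s'}"
        then obtain a where a: "a \<in> S t0" "z = xa a" "xa a t = s'" by auto
        then have "a \<in> P" using xa_indep[OF c a(1)] by (simp add: P_def)
        then show "z \<in> xa ` P" using a(2) by blast
      next
        fix z assume "z \<in> xa ` P"
        then obtain a where a: "a \<in> P" "z = xa a" by auto
        then have aS: "a \<in> S t0" and "phi c t (pre c a) = s'" by (auto simp: P_def)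
        then have "xa a t = s'" using xa_indep[OF c aS] by simp
        then show "z \<in> {z \<in> xa ` S t0. z t = s'}" using a(2) aS by blast
      qed
      finally show ?thesis .
    qed
    also have "(\<Sum>z\<in>xa ` P. y z) = (\<Sum>a\<in>P. y (xa a))"
      using sum.reindex[OF inj_on_subset[OF xa_inj PS]] by simp
    also have "\<dots> = (\<Sum>a\<in>P. h c (pre c a))"
    proof (rule sum.cong[OF refl])
      fix a assume "a \<in> P"
      then have aS: "a \<in> S t0" by (simp add: P_def)
      have "h c (pre c a) = h t0 (phi c t0 (pre c a))"
        using L2(4)[OF refl c(2)] pre(1)[OF c(2) aS] by simp
      then show "y (xa a) = h c (pre c a)" using aS xa_t0 pre(2)[OF c(2) aS] by (simp add: y_def)
    qed
    also have "\<dots> = (\<Sum>b\<in>pre c ` P. h c b)"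
    proof -
      have "inj_on (pre c) P"
      proof (rule inj_onI)
        fix a b assume ab: "a \<in> P" "b \<in> P" "pre c a = pre c b"
        have "a = phi c t0 (pre c a)" using pre(2)[OF c(2)] ab(1) PS by auto
        also have "\<dots> = phi c t0 (pre c b)" using ab(3) by simp
        also have "\<dots> = b" using pre(2)[OF c(2)] ab(2) PS by auto
        finally show "a = b" .
      qed
      then have "sum (h c) (pre c ` P) = sum (h c \<circ> pre c) P" by (rule sum.reindex)
      then show ?thesis by simp
    qed
    also have "pre c ` P = {b\<in>S c. phi c t b = s'}"
    proof
      show "pre c ` P \<subseteq> {b\<in>S c. phi c t b = s'}" using pre(1)[OF c(2)] by (auto simp: P_def)
    next
      show "{b\<in>S c. phi c t b = s'} \<subseteq> pre c ` P"
      proof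
        fix b assume b: "b \<in> {b\<in>S c. phi c t b = s'}"
        have a: "phi c t0 b \<in> S t0" using L2(3)[OF refl c(2)] b by blast
        have "pre c (phi c t0 b) = b" using pre_phi[OF c(2)] b by simp
        then show "b \<in> pre c ` P" using a b unfolding P_def by (intro rev_image_eqI[of "phi c t0 b"]) auto
      qed
    qed
    also have "(\<Sum>b\<in>{b\<in>S c. phi c t b = s'}. h c b) = h t s'"
      using hpush[OF c(1), of s'] False by simp
    finally show ?thesis .
  qed
qed

end

theorem mainTheorem8:
  fixes X :: "'t::order \<Rightarrow> 'x set" and p :: "'t \<Rightarrow> 'x"
    and phi :: "'t \<Rightarrow> 't \<Rightarrow> 'x \<Rightarrow> 'x"
    and h :: "'t \<Rightarrow> 'x \<Rightarrow> 'a::ab_group_add"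
  assumes "directed_poset TYPE('t)"
    and "pointed_diagram X p phi"
    and "h \<in> G_lim X p phi"
  shows "h \<in> K_img X p phi \<longleftrightarrow> (\<exists>B::nat. \<forall>t. card (supp (h t)) \<le> B)"
proof
  assume "h \<in> K_img X p phi"
  then obtain y where y: "y \<in> smash (lim_X X phi) p" "h = rho p y" by (auto simp: K_img_def)
  have fy: "finite (supp y)" using y(1) by (simp add: smash_def)
  have "\<forall>t. card (supp (h t)) \<le> card (supp y)"
  proof
    fix t
    have "supp (h t) \<subseteq> (\<lambda>x. x t) ` supp y"
    proof
      fix s' assume "s' \<in> supp (h t)"
      then have "h t s' \<noteq> 0" by (simp add: supp_def)
      then have "(\<Sum>z\<in>{z\<in>supp y. z t = s'}. y z) \<noteq> 0"
        by (auto simp: y(2) rho_def push_def split: if_splits)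
      then have "{z\<in>supp y. z t = s'} \<noteq> {}" by (metis sum.empty)
      then show "s' \<in> (\<lambda>x. x t) ` supp y" by auto
    qed
    then show "card (supp (h t)) \<le> card (supp y)"
    proof -
      assume sub: "supp (h t) \<subseteq> (\<lambda>x. x t) ` supp y"
      have "card (supp (h t)) \<le> card ((\<lambda>x. x t) ` supp y)" using card_mono[OF finite_imageI[OF fy] sub] .
      also have "\<dots> \<le> card (supp y)" using card_image_le[OF fy] .
      finally show ?thesis .
    qed
  qed
  then show "\<exists>B::nat. \<forall>t. card (supp (h t)) \<le> B" by blast
next
  assume "\<exists>B::nat. \<forall>t. card (supp (h t)) \<le> B"
  then obtain B :: nat where B: "\<forall>t. card (supp (h t)) \<le> B" by blast
  let ?R = "range (\<lambda>t. card (supp (h t)))"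
  have "?R \<subseteq> {..B}" using B by auto
  then have fR: "finite ?R" using finite_subset by blast
  have "Max ?R \<in> ?R" using fR by (intro Max_in) auto
  then obtain t0 where t0: "card (supp (h t0)) = Max ?R" by auto
  have mx: "\<forall>t. card (supp (h t)) \<le> card (supp (h t0))"
  proof
    fix t show "card (supp (h t)) \<le> card (supp (h t0))" unfolding t0 by (rule Max_ge[OF fR]) simp
  qed
  interpret Gmax X p phi h t0 by (intro Gmax.intro Gsetup.intro Gmax_axioms.intro assms mx)
  show "h \<in> K_img X p phi" unfolding K_img_def using y_smash rho_y by (metis image_eqI)
qed

end
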